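(* Let $(\Omega,\mathcal{F},\mu)$ be a probability space and $\mathcal{C},\mathcal{G},\mathcal{H}$ sub-$\sigma$-algebras of $\mathcal{F}$ with $\mathcal{C}\subset\mathcal{G}$ and $\mathcal{C}\subset\mathcal{H}$. Let $f$ be an $\mathcal{H}$-measurable function with $|f|\le g$ a.e. for some (finite-valued) $\mathcal{C}$-measurable function $g$. Then, almost everywhere, $$|\mathbb{E}[f|\mathcal{G}]-\mathbb{E}[f|\mathcal{C}]|\le 2\,\varphi_{\mathcal{C}}(\mathcal{G},\mathcal{H})\,g.$$
   Context: Functions are identified when equal a.e. Conditional expectations are understood in the generalized sense: for $f$ with $|f|\le g$, $g$ $\mathcal{C}$-measurable and $\mathcal{C}\subset\mathcal{G}$, $\mathbb{E}[f|\mathcal{G}]:=\lim_{n\to\infty}\mathbb{E}[f\mathbb{I}_{\{g\le n\}}|\mathcal{G}]$ a.e. For a measurable $h$, let $\|h\|_{\mathcal{C},\infty}$ denote the smallest (a.e.) $\mathcal{C}$-measurable function $k\ge 0$ with $|h|\le k$ a.e. (the infimum in the lattice of a.e.-classes). The $\mathcal{C}$-conditioned uniform mixing coefficient is $$\varphi_{\mathcal{C}}(\mathcal{G},\mathcal{H}):=\sup_{B\in\mathcal{H}}\big\|\mathbb{E}[\mathbb{I}_B|\mathcal{G}]-\mathbb{E}[\mathbb{I}_B|\mathcal{C}]\big\|_{\mathcal{C},\infty},$$ the supremum taken in the lattice of a.e.-classes of measurable functions. *)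

theory Defs
  imports "HOL-Probability.Probability"
begin

definition gen_cond_exp :: "'a measure \<Rightarrow> 'a measure \<Rightarrow> ('a \<Rightarrow> real) \<Rightarrow> ('a \<Rightarrow> real) \<Rightarrow> ('a \<Rightarrow> real)" where
  "gen_cond_exp M G g f =
     (\<lambda>x. lim (\<lambda>n::nat. real_cond_exp M G (\<lambda>y. f y * indicator {y. g y \<le> real n} y) x))"

definition is_cond_sup_norm :: "'a measure \<Rightarrow> 'a measure \<Rightarrow> ('a \<Rightarrow> real) \<Rightarrow> ('a \<Rightarrow> real) \<Rightarrow> bool" where
  "is_cond_sup_norm M C h k \<longleftrightarrow>
     k \<in> borel_measurable C \<and> (AE x in M. 0 \<le> k x) \<and> (AE x in M. \<bar>h x\<bar> \<le> k x) \<and>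
     (\<forall>k'. k' \<in> borel_measurable C \<and> (AE x in M. 0 \<le> k' x) \<and> (AE x in M. \<bar>h x\<bar> \<le> k' x)
            \<longrightarrow> (AE x in M. k x \<le> k' x))"

(* \<phi> is (a representative of) the C-conditioned uniform mixing coefficient
  \<phi>_C(G,H) = sup_{B \<in> H} condsupnorm(E[1_B|G] - E[1_B|C]), the supremum being taken in the
  lattice of a.e.-classes of measurable functions. *)
definition is_cond_phi_mixing :: "'a measure \<Rightarrow> 'a measure \<Rightarrow> 'a measure \<Rightarrow> 'a measure \<Rightarrow> ('a \<Rightarrow> real) \<Rightarrow> bool" where
  "is_cond_phi_mixing M C G H \<phi> \<longleftrightarrow>
     \<phi> \<in> borel_measurable M \<and>
     (\<forall>B\<in>sets H. \<forall>k. is_cond_sup_norm M C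
          (\<lambda>x. real_cond_exp M G (indicator B) x - real_cond_exp M C (indicator B) x) k
          \<longrightarrow> (AE x in M. k x \<le> \<phi> x)) \<and>
     (\<forall>\<psi>. \<psi> \<in> borel_measurable M \<and>
          (\<forall>B\<in>sets H. \<forall>k. is_cond_sup_norm M C
              (\<lambda>x. real_cond_exp M G (indicator B) x - real_cond_exp M C (indicator B) x) k
              \<longrightarrow> (AE x in M. k x \<le> \<psi> x))
          \<longrightarrow> (AE x in M. \<phi> x \<le> \<psi> x))"

end

theory Submission
  imports Defs
begin

lemma sfs: assumes "prob_space M" "subalgebra M F" shows "sigma_finite_subalgebra M F"
proof -
  interpret prob_space M by fact
  show ?thesis by (rule finite_measure_subalgebra_is_sigma_finite)
     (simp add: finite_measure_subalgebra_def finite_measure_subalgebra_axioms_def finite_measure_axioms assms)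
qed

lemma cond_sup_norm_exists:
  assumes M: "prob_space M" and sub: "subalgebra M C" and hm: "h \<in> borel_measurable M"
    and hb: "AE x in M. \<bar>h x\<bar> \<le> 1"
  shows "\<exists>k. is_cond_sup_norm M C h k"
proof -
  interpret prob_space M by (rule M)
  define Fam where "Fam = {k. k \<in> borel_measurable C \<and> (AE x in M. 0 \<le> k x) \<and> (AE x in M. \<bar>h x\<bar> \<le> k x)}"
  define I where "I k = (\<integral>x. max 0 (min (k x) 1) \<partial>M)" for k :: "'a \<Rightarrow> real"
  have Cm: "k \<in> borel_measurable M" if "k \<in> borel_measurable C" for k :: "'a \<Rightarrow> real"
    using measurable_from_subalg[OF sub that] .
  have Iint: "integrable M (\<lambda>x. max 0 (min (k x) 1))" if "k \<in> borel_measurable M" for k :: "'a \<Rightarrow> real"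
    by (rule integrable_const_bound[where B=1]) (use that in auto)
  have I0: "0 \<le> I k" for k unfolding I_def by (rule integral_nonneg_AE) auto
  have one: "(\<lambda>_. 1) \<in> Fam" unfolding Fam_def using hb by auto
  define m where "m = Inf (I ` Fam)"
  have bdd: "bdd_below (I ` Fam)" using I0 by (intro bdd_belowI[of _ 0]) auto
  have mle: "m \<le> I k" if "k \<in> Fam" for k unfolding m_def using bdd that by (auto intro: cInf_lower)
  have "\<exists>k\<in>Fam. I k < m + 1 / Suc n" for n :: nat
  proof -
    have "Inf (I ` Fam) < m + 1 / Suc n" unfolding m_def by simp
    then obtain y where "y \<in> I ` Fam" "y < m + 1 / Suc n"
      using cInf_lessD[of "I ` Fam"] one by blast
    then show ?thesis by auto
  qed
  then obtain ks where ksF: "\<And>n. ks n \<in> Fam" and ksI: "\<And>n. I (ks n) < m + 1 / Suc n" by metis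
  have ksC[measurable]: "ks n \<in> borel_measurable C" for n using ksF[of n] by (auto simp: Fam_def)
  define K where "K x = (INF n. max 0 (min (ks n x) 1))" for x
  have bddK: "bdd_below (range (\<lambda>n. max 0 (min (ks n x) 1)))" for x by (intro bdd_belowI[of _ 0]) auto
  have K0: "0 \<le> K x" for x unfolding K_def by (rule cINF_greatest) auto
  have Kn: "K x \<le> max 0 (min (ks n x) 1)" for x n unfolding K_def by (rule cINF_lower[OF bddK]) auto
  have K1: "K x \<le> 1" for x using Kn[of x 0] by simp
  have KC[measurable]: "K \<in> borel_measurable C" unfolding K_def by measurable
  have KM[measurable]: "K \<in> borel_measurable M" by (rule Cm[OF KC])
  have "AE x in M. \<forall>n. \<bar>h x\<bar> \<le> ks n x" using ksF by (auto simp: Fam_def AE_all_countable)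
  then have "AE x in M. \<bar>h x\<bar> \<le> K x" using hb
  proof eventually_elim
    case (elim x) then show ?case unfolding K_def by (intro cINF_greatest) (auto simp: le_max_iff_disj)
  qed
  then have KF: "K \<in> Fam" unfolding Fam_def using K0 by auto
  have IK: "I k = integral\<^sup>L M k" if "\<And>x. 0 \<le> k x" "\<And>x. k x \<le> 1" for k
    proof -
    have "(\<lambda>x. max 0 (min (k x) 1)) = k" using that by (auto simp: fun_eq_iff min_def max_def)
    then show ?thesis unfolding I_def by simp
  qed
  have intK: "integrable M K" using Iint[OF KM] IK K0 K1 by (simp add: min_def max_def)
  have "integral\<^sup>L M K \<le> m"
  proof (rule field_le_epsilon)
    fix e :: real assume "0 < e"
    then obtain n where n: "inverse (of_nat (Suc n)) < e" using reals_Archimedean by blast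
    have "integral\<^sup>L M K \<le> I (ks n)" unfolding I_def
      by (intro integral_mono intK Iint Cm ksC Kn)
    also have "\<dots> \<le> m + e" using ksI[of n] n by (simp add: inverse_eq_divide)
    finally show "integral\<^sup>L M K \<le> m + e" .
  qed
  have minim: "AE x in M. K x \<le> k' x" if k': "k' \<in> Fam" for k'
  proof -
    have k'C[measurable]: "k' \<in> borel_measurable C" using k' by (auto simp: Fam_def)
    have k'M[measurable]: "k' \<in> borel_measurable M" by (rule Cm[OF k'C])
    define K2 where "K2 x = max 0 (min (K x) (k' x))" for x
    have K2C: "K2 \<in> borel_measurable C" unfolding K2_def by measurable
    have K2M[measurable]: "K2 \<in> borel_measurable M" by (rule Cm[OF K2C])
    have "AE x in M. \<bar>h x\<bar> \<le> K2 x" using k' \<open>K \<in> Fam\<close> unfolding Fam_def K2_def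
      by (auto elim!: eventually_elim2)
    then have "K2 \<in> Fam" using K2C unfolding Fam_def K2_def by auto
    then have "m \<le> I K2" by (rule mle)
    also have "I K2 = integral\<^sup>L M K2" by (rule IK) (use K1 in \<open>auto simp: K2_def min_le_iff_disj\<close>)
    finally have mK2: "m \<le> integral\<^sup>L M K2" .
    have intK2: "integrable M K2"
      by (rule integrable_const_bound[where B=1]) (use K1 K0 in \<open>auto simp: K2_def min_le_iff_disj\<close>)
    have intD: "integrable M (\<lambda>x. K x - K2 x)" using intK intK2 by auto
    have D0: "AE x in M. 0 \<le> K x - K2 x" using K0 by (auto simp: K2_def)
    have "integral\<^sup>L M (\<lambda>x. K x - K2 x) = integral\<^sup>L M K - integral\<^sup>L M K2"
      using intK intK2 by simp
    also have "\<dots> \<le> 0" using mK2 \<open>integral\<^sup>L M K \<le> m\<close> by simp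
    finally have "integral\<^sup>L M (\<lambda>x. K x - K2 x) = 0"
      using integral_nonneg_AE[OF D0] by linarith
    then have "AE x in M. K x - K2 x = 0" using integral_nonneg_eq_0_iff_AE[OF intD D0] by simp
    moreover have "AE x in M. 0 \<le> k' x" using k' by (auto simp: Fam_def)
    ultimately show ?thesis by eventually_elim (auto simp: K2_def)
  qed
  show ?thesis
    unfolding is_cond_sup_norm_def
    apply (rule exI[of _ K])
    using KF minim by (auto simp: Fam_def)
qed

lemma layer_count:
  fixes t :: real and n :: nat
  assumes t0: "0 \<le> t" and t1: "t \<le> 1" and n: "n \<ge> 1"
  shows "(\<Sum>i\<in>{1..n}. if real i / real n \<le> t then 1 else 0 :: real) / n \<le> t"
    and "t - 1 / n \<le> (\<Sum>i\<in>{1..n}. if real i / real n \<le> t then 1 else 0 :: real) / n"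
proof -
  define j where "j = nat \<lfloor>real n * t\<rfloor>"
  have fl0: "0 \<le> \<lfloor>real n * t\<rfloor>" using t0 by simp
  have jn: "j \<le> n"
  proof -
    have "real n * t \<le> real n" using t1 by (simp add: mult_left_le)
    then have "\<lfloor>real n * t\<rfloor> \<le> \<lfloor>real n\<rfloor>" by (rule floor_mono)
    then have "\<lfloor>real n * t\<rfloor> \<le> int n" by simp
    then show ?thesis unfolding j_def by simp
  qed
  have npos: "0 < real n" using n by simp
  have set: "{i\<in>{1..n}. real i / real n \<le> t} = {1..j}"
  proof -
    have iff: "real i / real n \<le> t \<longleftrightarrow> i \<le> j" for i
    proof -
      have "real i / real n \<le> t \<longleftrightarrow> real i \<le> real n * t" using npos by (simp add: divide_le_eq mult.commute)
      also have "\<dots> \<longleftrightarrow> int i \<le> \<lfloor>real n * t\<rfloor>" by (simp add: le_floor_iff)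
      also have "\<dots> \<longleftrightarrow> i \<le> j" unfolding j_def using fl0 by (simp add: le_nat_iff)
      finally show ?thesis .
    qed
    show ?thesis
    proof (rule set_eqI)
      fix i show "i \<in> {i\<in>{1..n}. real i / real n \<le> t} \<longleftrightarrow> i \<in> {1..j}"
        unfolding iff using jn by auto
    qed
  qed
  have S: "(\<Sum>i\<in>{1..n}. if real i / real n \<le> t then 1 else 0 :: real) = real j"
  proof -
    have "(\<Sum>i\<in>{1..n}. if real i / real n \<le> t then 1 else 0 :: real) = (\<Sum>i\<in>{i\<in>{1..n}. real i / real n \<le> t}. 1::real)"
      by (subst sum.inter_filter) auto
    also have "\<dots> = real j" unfolding set by simp
    finally show ?thesis .
  qed
  have jr: "real j = real_of_int \<lfloor>real n * t\<rfloor>" unfolding j_def using fl0 by simp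
  have a: "real j \<le> real n * t" using jr by linarith
  have b: "real n * t - 1 \<le> real j" using jr by linarith
  show "(\<Sum>i\<in>{1..n}. if real i / real n \<le> t then 1 else 0 :: real) / n \<le> t"
    using a by (subst S, subst pos_divide_le_eq[OF npos]) (simp add: mult.commute)
  show "t - 1 / n \<le> (\<Sum>i\<in>{1..n}. if real i / real n \<le> t then 1 else 0 :: real) / n"
  proof -
    have "(t - 1 / n) * real n = t * real n - 1" using npos by (simp add: left_diff_distrib)
    also have "\<dots> \<le> real j" using b by (simp add: mult.commute)
    finally show ?thesis by (subst S, subst pos_le_divide_eq[OF npos])
  qed
qed

locale mix =
  fixes M C G H :: "'a measure" and \<phi> :: "'a \<Rightarrow> real"
  assumes M: "prob_space M" and sC: "subalgebra M C" and sG: "subalgebra M G" and sH: "subalgebra M H"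
    and phi: "is_cond_phi_mixing M C G H \<phi>"

sublocale mix \<subseteq> prob_space M by (rule M)
sublocale mix \<subseteq> G: sigma_finite_subalgebra M G by (rule sfs[OF M sG])
sublocale mix \<subseteq> C: sigma_finite_subalgebra M C by (rule sfs[OF M sC])

context mix
begin

lemma HM: "f \<in> borel_measurable H \<Longrightarrow> f \<in> borel_measurable M"
  by (rule measurable_from_subalg[OF sH])

lemma indicator_D_bound:
  assumes B: "B \<in> sets H"
  shows "AE x in M. \<bar>real_cond_exp M G (indicator B) x - real_cond_exp M C (indicator B) x\<bar> \<le> \<phi> x"
proof -
  have BM: "B \<in> sets M" using B sH by (auto simp: subalgebra_def)
  have int: "integrable M (indicator B :: 'a \<Rightarrow> real)"
    by (rule integrable_const_bound[where B=1]) (auto simp: borel_measurable_indicator[OF BM])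
  have "AE x in M. 0 \<le> real_cond_exp M G (indicator B) x" by (rule G.real_cond_exp_ge_c[OF int]) auto
  moreover have "AE x in M. real_cond_exp M G (indicator B) x \<le> 1" by (rule G.real_cond_exp_le_c[OF int]) auto
  moreover have "AE x in M. 0 \<le> real_cond_exp M C (indicator B) x" by (rule C.real_cond_exp_ge_c[OF int]) auto
  moreover have "AE x in M. real_cond_exp M C (indicator B) x \<le> 1" by (rule C.real_cond_exp_le_c[OF int]) auto
  ultimately have b1: "AE x in M. \<bar>real_cond_exp M G (indicator B) x - real_cond_exp M C (indicator B) x\<bar> \<le> 1"
    by eventually_elim auto
  have meas: "(\<lambda>x. real_cond_exp M G (indicator B) x - real_cond_exp M C (indicator B) x) \<in> borel_measurable M"
    by measurable
  obtain k where k: "is_cond_sup_norm M C (\<lambda>x. real_cond_exp M G (indicator B) x - real_cond_exp M C (indicator B) x) k"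
    using cond_sup_norm_exists[OF M sC meas b1] by blast
  have "AE x in M. k x \<le> \<phi> x" using phi B k unfolding is_cond_phi_mixing_def by blast
  moreover have "AE x in M. \<bar>real_cond_exp M G (indicator B) x - real_cond_exp M C (indicator B) x\<bar> \<le> k x"
    using k unfolding is_cond_sup_norm_def by blast
  ultimately show ?thesis by eventually_elim auto
qed

end

lemma (in sigma_finite_subalgebra) cexp_layer:
  fixes f :: "'b \<Rightarrow> 'a \<Rightarrow> real"
  assumes int: "\<And>i. integrable M (f i)"
  shows "AE x in M. real_cond_exp M F (\<lambda>y. (\<Sum>i\<in>I. f i y) / c) x = (\<Sum>i\<in>I. real_cond_exp M F (f i) x) / c"
proof -
  have "AE x in M. real_cond_exp M F (\<lambda>y. (\<Sum>i\<in>I. f i y) / c) x = real_cond_exp M F (\<lambda>y. \<Sum>i\<in>I. f i y) x / c"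
    by (rule real_cond_exp_cdiv) (rule Bochner_Integration.integrable_sum[OF int])
  moreover have "AE x in M. real_cond_exp M F (\<lambda>y. \<Sum>i\<in>I. f i y) x = (\<Sum>i\<in>I. real_cond_exp M F (f i) x)"
    by (rule real_cond_exp_sum) (rule int)
  ultimately show ?thesis by eventually_elim simp
qed

context mix
begin

lemma approx_bound:
  assumes hH[measurable]: "h \<in> borel_measurable H" and h0: "\<And>x. 0 \<le> h x" and h1: "\<And>x. h x \<le> 1"
    and n: "n \<ge> 1"
  shows "AE x in M. \<bar>real_cond_exp M G h x - real_cond_exp M C h x\<bar> \<le> \<phi> x + 1 / real n"
proof -
  have hM[measurable]: "h \<in> borel_measurable M" by (rule HM[OF hH])
  define A where "A i = {y \<in> space M. real i / real n \<le> h y}" for i :: nat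
  have AH: "A i \<in> sets H" for i
  proof -
    have "space H = space M" using sH by (simp add: subalgebra_def)
    then have "A i = {y \<in> space H. real i / real n \<le> h y}" by (simp add: A_def)
    also have "\<dots> \<in> sets H" by measurable
    finally show ?thesis .
  qed
  have AM[measurable]: "A i \<in> sets M" for i using AH[of i] sH by (auto simp: subalgebra_def)
  define hn where "hn y = (\<Sum>i\<in>{1..n}. indicator (A i) y) / real n" for y :: 'a
  have hnM[measurable]: "hn \<in> borel_measurable M" unfolding hn_def by measurable
  have hn_eq: "hn y = (\<Sum>i\<in>{1..n}. if real i / real n \<le> h y then 1 else 0 :: real) / n" if "y \<in> space M" for y
    unfolding hn_def by (intro arg_cong[where f="\<lambda>s. s / real n"] sum.cong) (auto simp: A_def indicator_def that)
  have hn_le: "hn y \<le> h y" if "y \<in> space M" for y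
    using layer_count(1)[OF h0 h1 n] hn_eq[OF that] by simp
  have hn_ge: "h y - 1 / n \<le> hn y" if "y \<in> space M" for y
    using layer_count(2)[OF h0 h1 n] hn_eq[OF that] by simp
  have intI: "integrable M (indicator (A i) :: 'a \<Rightarrow> real)" for i
    by (rule integrable_const_bound[where B=1]) auto
  have inth: "integrable M h"
    by (rule integrable_const_bound[where B=1]) (use h0 h1 in auto)
  have n1: "1 / real n \<le> 1" using n by simp
  have inthn: "integrable M hn"
  proof (rule integrable_const_bound[where B=1])
    show "AE x in M. norm (hn x) \<le> 1"
    proof (rule AE_I2)
      fix x assume x: "x \<in> space M"
      show "norm (hn x) \<le> 1" using hn_le[OF x] hn_ge[OF x] h0[of x] h1[of x] n1 by auto
    qed
  qed simp
  have "AE x in M. \<forall>i. \<bar>real_cond_exp M G (indicator (A i)) x - real_cond_exp M C (indicator (A i)) x\<bar> \<le> \<phi> x"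
    using indicator_D_bound[OF AH] by (simp add: AE_all_countable)
  moreover have "AE x in M. real_cond_exp M G hn x = (\<Sum>i\<in>{1..n}. real_cond_exp M G (indicator (A i)) x) / real n"
    unfolding hn_def by (rule G.cexp_layer) (rule intI)
  moreover have "AE x in M. real_cond_exp M C hn x = (\<Sum>i\<in>{1..n}. real_cond_exp M C (indicator (A i)) x) / real n"
    unfolding hn_def by (rule C.cexp_layer) (rule intI)
  ultimately have Dhn: "AE x in M. \<bar>real_cond_exp M G hn x - real_cond_exp M C hn x\<bar> \<le> \<phi> x"
  proof eventually_elim
    case (elim x)
    define g where "g i = real_cond_exp M G (indicator (A i)) x" for i
    define c where "c i = real_cond_exp M C (indicator (A i)) x" for i
    have npos: "0 < real n" using n by simp
    have "\<bar>real_cond_exp M G hn x - real_cond_exp M C hn x\<bar> = \<bar>(\<Sum>i\<in>{1..n}. g i) / n - (\<Sum>i\<in>{1..n}. c i) / n\<bar>"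
      using elim by (simp add: g_def c_def)
    also have "\<dots> = \<bar>\<Sum>i\<in>{1..n}. (g i - c i)\<bar> / n"
      by (simp add: sum_subtractf diff_divide_distrib[symmetric] abs_divide)
    also have "\<dots> \<le> (\<Sum>i\<in>{1..n}. \<bar>g i - c i\<bar>) / n"
      by (intro divide_right_mono sum_abs) simp
    also have "\<dots> \<le> (\<Sum>i\<in>{1..n}. \<phi> x) / n"
      using elim(1) by (intro divide_right_mono sum_mono) (auto simp: g_def c_def)
    also have "\<dots> = \<phi> x" using npos by simp
    finally show ?case .
  qed
  have dnn: "AE x in M. 0 \<le> h x - hn x" using hn_le by auto
  have dle: "AE x in M. h x - hn x \<le> 1 / n" using hn_ge by (auto simp: algebra_simps)
  have intd: "integrable M (\<lambda>x. h x - hn x)" using inth inthn by auto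
  have "AE x in M. real_cond_exp M G (\<lambda>x. h x - hn x) x = real_cond_exp M G h x - real_cond_exp M G hn x"
    by (rule G.real_cond_exp_diff[OF inth inthn])
  moreover have "AE x in M. real_cond_exp M C (\<lambda>x. h x - hn x) x = real_cond_exp M C h x - real_cond_exp M C hn x"
    by (rule C.real_cond_exp_diff[OF inth inthn])
  moreover have "AE x in M. 0 \<le> real_cond_exp M G (\<lambda>x. h x - hn x) x" by (rule G.real_cond_exp_ge_c[OF intd dnn])
  moreover have "AE x in M. real_cond_exp M G (\<lambda>x. h x - hn x) x \<le> 1 / n" by (rule G.real_cond_exp_le_c[OF intd dle])
  moreover have "AE x in M. 0 \<le> real_cond_exp M C (\<lambda>x. h x - hn x) x" by (rule C.real_cond_exp_ge_c[OF intd dnn])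
  moreover have "AE x in M. real_cond_exp M C (\<lambda>x. h x - hn x) x \<le> 1 / n" by (rule C.real_cond_exp_le_c[OF intd dle])
  moreover note Dhn
  ultimately show ?thesis by eventually_elim auto
qed

lemma bounded_bound:
  assumes hH[measurable]: "h \<in> borel_measurable H" and h0: "\<And>x. 0 \<le> h x" and h1: "\<And>x. h x \<le> 1"
  shows "AE x in M. \<bar>real_cond_exp M G h x - real_cond_exp M C h x\<bar> \<le> \<phi> x"
proof -
  have "AE x in M. \<forall>n. \<bar>real_cond_exp M G h x - real_cond_exp M C h x\<bar> \<le> \<phi> x + 1 / real (Suc n)"
    unfolding AE_all_countable by (intro allI approx_bound[OF hH h0 h1]) simp
  then show ?thesis
  proof eventually_elim
    case (elim x)
    show ?case
    proof (rule field_le_epsilon)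
      fix e :: real assume "0 < e"
      then obtain n where n: "inverse (of_nat (Suc n)) < e" using reals_Archimedean by blast
      show "\<bar>real_cond_exp M G h x - real_cond_exp M C h x\<bar> \<le> \<phi> x + e"
        using elim[rule_format, of n] n by (simp add: inverse_eq_divide)
    qed
  qed
qed

lemma signed_bound:
  assumes hH[measurable]: "h \<in> borel_measurable H" and h1: "\<And>x. \<bar>h x\<bar> \<le> 1"
  shows "AE x in M. \<bar>real_cond_exp M G h x - real_cond_exp M C h x\<bar> \<le> 2 * \<phi> x"
proof -
  have hM[measurable]: "h \<in> borel_measurable M" by (rule HM[OF hH])
  define hp where "hp x = max 0 (h x)" for x
  define hm where "hm x = max 0 (- h x)" for x
  have hpH: "hp \<in> borel_measurable H" unfolding hp_def by measurable
  have hmH: "hm \<in> borel_measurable H" unfolding hm_def by measurable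
  have hpM[measurable]: "hp \<in> borel_measurable M" unfolding hp_def by measurable
  have hmM[measurable]: "hm \<in> borel_measurable M" unfolding hm_def by measurable
  have hpb: "0 \<le> hp x" "hp x \<le> 1" for x using h1[of x] by (auto simp: hp_def)
  have hmb: "0 \<le> hm x" "hm x \<le> 1" for x using h1[of x] by (auto simp: hm_def)
  have intp: "integrable M hp" by (rule integrable_const_bound[where B=1]) (use hpb in auto)
  have intm: "integrable M hm" by (rule integrable_const_bound[where B=1]) (use hmb in auto)
  have heq: "h = (\<lambda>x. hp x - hm x)" by (auto simp: fun_eq_iff hp_def hm_def max_def)
  have "AE x in M. real_cond_exp M G (\<lambda>x. hp x - hm x) x = real_cond_exp M G hp x - real_cond_exp M G hm x"
    by (rule G.real_cond_exp_diff[OF intp intm])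
  moreover have "AE x in M. real_cond_exp M C (\<lambda>x. hp x - hm x) x = real_cond_exp M C hp x - real_cond_exp M C hm x"
    by (rule C.real_cond_exp_diff[OF intp intm])
  moreover note bounded_bound[OF hpH hpb] bounded_bound[OF hmH hmb]
  ultimately show ?thesis unfolding heq[symmetric] by eventually_elim auto
qed

end

lemma gen_ce_eq:
  assumes sf: "sigma_finite_subalgebra M F" and fin: "finite_measure M"
    and gF[measurable]: "g \<in> borel_measurable F" and hM[measurable]: "h \<in> borel_measurable M"
    and hb: "\<And>x. \<bar>h x\<bar> \<le> 1" and fM[measurable]: "f \<in> borel_measurable M"
    and fgh: "AE x in M. f x = g x * h x" and g0: "AE x in M. 0 \<le> g x"
  shows "AE x in M. gen_cond_exp M F g f x = g x * real_cond_exp M F h x"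
proof -
  interpret sigma_finite_subalgebra M F by fact
  interpret finite_measure M by fact
  have gM[measurable]: "g \<in> borel_measurable M" by (rule measurable_from_subalg[OF subalg gF])
  define gn where "gn n x = (if g x \<le> real n then g x else 0)" for n :: nat and x
  have gnF[measurable]: "gn n \<in> borel_measurable F" for n unfolding gn_def by measurable
  have gnM[measurable]: "gn n \<in> borel_measurable M" for n unfolding gn_def by measurable
  have find: "(\<lambda>y. f y * indicator {y. g y \<le> real n} y) = (\<lambda>y. f y * (if g y \<le> real n then 1 else 0))" for n
    by (simp add: indicator_def fun_eq_iff)
  have fiM[measurable]: "(\<lambda>y. f y * indicator {y. g y \<le> real n} y) \<in> borel_measurable M" for n
    unfolding find by measurable
  have ae1: "AE y in M. f y * indicator {y. g y \<le> real n} y = gn n y * h y" for n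
    using fgh by eventually_elim (auto simp: gn_def indicator_def)
  have intgh: "integrable M (\<lambda>y. gn n y * h y)" for n
  proof (rule integrable_const_bound[where B="real n"])
    show "AE x in M. norm (gn n x * h x) \<le> real n"
      using g0
    proof eventually_elim
      case (elim x)
      have "\<bar>gn n x\<bar> \<le> real n" using elim by (auto simp: gn_def)
      moreover have "\<bar>h x\<bar> \<le> 1" by (rule hb)
      ultimately have "\<bar>gn n x\<bar> * \<bar>h x\<bar> \<le> real n * 1" by (intro mult_mono) auto
      then show ?case by (simp add: abs_mult)
    qed
  qed simp
  have "AE x in M. \<forall>n. real_cond_exp M F (\<lambda>y. f y * indicator {y. g y \<le> real n} y) x = real_cond_exp M F (\<lambda>y. gn n y * h y) x"
    unfolding AE_all_countable
  proof
    fix n show "AE x in M. real_cond_exp M F (\<lambda>y. f y * indicator {y. g y \<le> real n} y) x = real_cond_exp M F (\<lambda>y. gn n y * h y) x"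
      by (rule real_cond_exp_cong[OF ae1 fiM]) measurable
  qed
  moreover have "AE x in M. \<forall>n. real_cond_exp M F (\<lambda>y. gn n y * h y) x = gn n x * real_cond_exp M F h x"
    unfolding AE_all_countable
  proof
    fix n show "AE x in M. real_cond_exp M F (\<lambda>y. gn n y * h y) x = gn n x * real_cond_exp M F h x"
      by (rule real_cond_exp_mult[OF gnF hM intgh])
  qed
  ultimately show ?thesis
  proof eventually_elim
    case (elim x)
    have seq: "(\<lambda>n. real_cond_exp M F (\<lambda>y. f y * indicator {y. g y \<le> real n} y) x) = (\<lambda>n. gn n x * real_cond_exp M F h x)"
      using elim by auto
    have "(\<lambda>n. gn n x * real_cond_exp M F h x) \<longlonglongrightarrow> g x * real_cond_exp M F h x"
    proof (rule tendsto_eventually)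
      show "\<forall>\<^sub>F n in sequentially. gn n x * real_cond_exp M F h x = g x * real_cond_exp M F h x"
        unfolding eventually_sequentially
      proof (intro exI allI impI)
        fix n assume "nat \<lceil>g x\<rceil> \<le> n"
        then have "real (nat \<lceil>g x\<rceil>) \<le> real n" by (simp only: of_nat_le_iff)
        then have "g x \<le> real n" using real_nat_ceiling_ge[of "g x"] by linarith
        then show "gn n x * real_cond_exp M F h x = g x * real_cond_exp M F h x" by (simp add: gn_def)
      qed
    qed
    then show ?case unfolding gen_cond_exp_def seq by (rule limI)
  qed
qed

theorem corollary4p11:
  fixes M C G H :: "'a measure" and f g \<phi> :: "'a \<Rightarrow> real"
  assumes "prob_space M"
    and "subalgebra M C" and "subalgebra M G" and "subalgebra M H"
    and "sets C \<subseteq> sets G" and "sets C \<subseteq> sets H"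
    and "f \<in> borel_measurable H"
    and "g \<in> borel_measurable C"
    and "AE x in M. \<bar>f x\<bar> \<le> g x"
    and "is_cond_phi_mixing M C G H \<phi>"
  shows "AE x in M. \<bar>gen_cond_exp M G g f x - gen_cond_exp M C g f x\<bar> \<le> 2 * \<phi> x * g x"
proof -
  interpret mix M C G H \<phi> using assms(1-4,10) by (simp add: mix_def)
  have CH: "subalgebra H C" using assms(2,4,6) by (auto simp: subalgebra_def)
  have CG: "subalgebra G C" using assms(2,3,5) by (auto simp: subalgebra_def)
  have CC: "subalgebra C C" by (auto simp: subalgebra_def)
  have gC[measurable]: "g \<in> borel_measurable C" by (rule assms(8))
  have gH[measurable]: "g \<in> borel_measurable H" by (rule measurable_from_subalg[OF CH gC])
  have gG: "g \<in> borel_measurable G" by (rule measurable_from_subalg[OF CG gC])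
  have fH[measurable]: "f \<in> borel_measurable H" by (rule assms(7))
  have fM: "f \<in> borel_measurable M" by (rule HM[OF fH])
  define h where "h x = (if 0 < g x then max (-1) (min 1 (f x / g x)) else 0)" for x
  have hH: "h \<in> borel_measurable H" unfolding h_def by measurable
  have hM: "h \<in> borel_measurable M" by (rule HM[OF hH])
  have hb: "\<bar>h x\<bar> \<le> 1" for x by (auto simp: h_def)
  have g0: "AE x in M. 0 \<le> g x" using assms(9) by eventually_elim auto
  have fgh: "AE x in M. f x = g x * h x" using assms(9)
  proof eventually_elim
    case (elim x)
    show ?case
    proof (cases "0 < g x")
      case True
      have b: "\<bar>f x / g x\<bar> \<le> 1" using elim True by (simp add: abs_divide)
      have "h x = f x / g x" using True b unfolding h_def abs_le_iff by (auto simp: max_def min_def)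
      then show ?thesis using True by simp
    next
      case False
      then show ?thesis using elim by (auto simp: h_def)
    qed
  qed
  have fin: "finite_measure M" by (rule finite_measure_axioms)
  have eG: "AE x in M. gen_cond_exp M G g f x = g x * real_cond_exp M G h x"
    by (rule gen_ce_eq[OF G.sigma_finite_subalgebra_axioms fin gG hM hb fM fgh g0])
  have eC: "AE x in M. gen_cond_exp M C g f x = g x * real_cond_exp M C h x"
    by (rule gen_ce_eq[OF C.sigma_finite_subalgebra_axioms fin gC hM hb fM fgh g0])
  note D = signed_bound[OF hH hb]
  from eG eC D g0 show ?thesis
  proof eventually_elim
    case (elim x)
    have "\<bar>gen_cond_exp M G g f x - gen_cond_exp M C g f x\<bar> = g x * \<bar>real_cond_exp M G h x - real_cond_exp M C h x\<bar>"
      using elim by (simp add: right_diff_distrib[symmetric] abs_mult)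
    also have "\<dots> \<le> g x * (2 * \<phi> x)" using elim by (intro mult_left_mono) auto
    finally show ?case by (simp add: mult_ac)
  qed
qed

end
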